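(* Let $G$ be a bipartite edge-magic simple graph with stable sets $X$ and $Y$, and suppose $G\cong H_1\oplus H_2$ is a decomposition of $G$. Then $\lim_{n\to\infty}|\tau_{S_{2n}(G;H_1,H_2)}|=\infty$.
   Context: For a $(p,q)$-graph $G$ ($p$ vertices, $q$ edges), an edge-magic labeling is a bijection $f:V(G)\cup E(G)\to[1,p+q]$ such that $f(x)+f(xy)+f(y)$ equals a constant (the valence) for every edge $xy$. For a graph $H$, $\tau_H$ is the set of integers that are valences of edge-magic labelings of $H$. A decomposition $G\cong H_1\oplus H_2$ means $H_1,H_2$ are subgraphs of $G$ whose edge sets partition $E(G)$. Writing $X=\{x_i\}_{i=1}^s$, $Y=\{y_j\}_{j=1}^t$, $S_{2n}(G;H_1,H_2)$ is the graph with vertex set $X\cup Y\cup\bigcup_{k=1}^n X_k\cup\bigcup_{k=1}^n Y_k$, where $X_k=\{x_i^k\}_{i=1}^s$, $Y_k=\{y_j^k\}_{j=1}^t$ are new vertices, and edge set $E(G)\cup\{x_iy_j^k: x_iy_j\in E(H_1),\,k\in[1,n]\}\cup\{x_i^ky_j: x_iy_j\in E(H_2),\,k\in[1,n]\}$. *)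

theory Defs
  imports Main
begin

definition simple_graph :: "'a set \<Rightarrow> 'a set set \<Rightarrow> bool" where
  "simple_graph V E \<longleftrightarrow> finite V \<and> E \<subseteq> {{x, y} | x y. x \<in> V \<and> y \<in> V \<and> x \<noteq> y}"

definition edge_magic_labeling ::
  "'a set \<Rightarrow> 'a set set \<Rightarrow> ('a + 'a set \<Rightarrow> nat) \<Rightarrow> nat \<Rightarrow> bool" where
  "edge_magic_labeling V E f k \<longleftrightarrow>
     bij_betw f (Inl ` V \<union> Inr ` E) {1 .. card V + card E} \<and>
     (\<forall>x y. {x, y} \<in> E \<and> x \<noteq> y \<longrightarrow> f (Inl x) + f (Inr {x, y}) + f (Inl y) = k)"

definition valences :: "'a set \<Rightarrow> 'a set set \<Rightarrow> nat set" where
  "valences V E = {k. \<exists>f. edge_magic_labeling V E f k}"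

definition edge_magic :: "'a set \<Rightarrow> 'a set set \<Rightarrow> bool" where
  "edge_magic V E \<longleftrightarrow> valences V E \<noteq> {}"

definition bipartite_with :: "'a set \<Rightarrow> 'a set set \<Rightarrow> 'a set \<Rightarrow> 'a set \<Rightarrow> bool" where
  "bipartite_with V E X Y \<longleftrightarrow> X \<union> Y = V \<and> X \<inter> Y = {} \<and>
     (\<forall>e\<in>E. \<exists>x\<in>X. \<exists>y\<in>Y. e = {x, y})"

definition edge_decomposition :: "'a set set \<Rightarrow> 'a set set \<Rightarrow> 'a set set \<Rightarrow> bool" where
  "edge_decomposition E E1 E2 \<longleftrightarrow> E1 \<union> E2 = E \<and> E1 \<inter> E2 = {}"

text \<open>The graph S_{2n}(G;H1,H2). Vertex (v,0) is the original v, (v,k) for k in [1,n]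
  is the copy v^k.\<close>
definition S2n_vertices :: "'a set \<Rightarrow> nat \<Rightarrow> ('a \<times> nat) set" where
  "S2n_vertices V n = V \<times> {0..n}"

definition S2n_edges ::
  "'a set \<Rightarrow> 'a set \<Rightarrow> 'a set set \<Rightarrow> 'a set set \<Rightarrow> 'a set set \<Rightarrow> nat \<Rightarrow> ('a \<times> nat) set set" where
  "S2n_edges X Y E E1 E2 n =
     (\<lambda>e. (\<lambda>v. (v, 0)) ` e) ` E
     \<union> {{(x, 0), (y, k)} | x y k. x \<in> X \<and> y \<in> Y \<and> {x, y} \<in> E1 \<and> 1 \<le> k \<and> k \<le> n}
     \<union> {{(x, k), (y, 0)} | x y k. x \<in> X \<and> y \<in> Y \<and> {x, y} \<in> E2 \<and> 1 \<le> k \<and> k \<le> n}"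

end

theory Submission imports Defs begin

definition sw :: "nat \<Rightarrow> nat \<Rightarrow> nat" where
  "sw t a = (if a = 0 then t else if a = t then 0 else a)"

lemma sw_sw[simp]: "sw t (sw t a) = a" by (auto simp: sw_def)
lemma sw_le: "a \<le> n \<Longrightarrow> t \<le> n \<Longrightarrow> sw t a \<le> n" by (auto simp: sw_def)
lemma sw_inj: "sw t a = sw t b \<Longrightarrow> a = b" by (metis sw_sw)
lemma sw0[simp]: "sw t 0 = t" by (simp add: sw_def)

lemma SE_char:
  assumes bp: "bipartite_with V E X Y" and dec: "edge_decomposition E E1 E2"
  shows "d \<in> S2n_edges X Y E E1 E2 n \<longleftrightarrow> (\<exists>x y b. x\<in>X \<and> y\<in>Y \<and> b \<le> n \<and>
     ((({x,y}\<in>E1 \<and> d={(x,0),(y,b)}) \<or> ({x,y}\<in>E2 \<and> d={(x,b),(y,0)}))))"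
proof
  assume "d \<in> S2n_edges X Y E E1 E2 n"
  then consider (a) e where "e \<in> E" "d = (\<lambda>v. (v, 0)) ` e"
    | (b) x y k where "x \<in> X" "y \<in> Y" "{x, y} \<in> E1" "1 \<le> k" "k \<le> n" "d = {(x, 0), (y, k)}"
    | (c) x y k where "x \<in> X" "y \<in> Y" "{x, y} \<in> E2" "1 \<le> k" "k \<le> n" "d = {(x, k), (y, 0)}"
    unfolding S2n_edges_def by blast
  then show "\<exists>x y b. x\<in>X \<and> y\<in>Y \<and> b \<le> n \<and>
     ((({x,y}\<in>E1 \<and> d={(x,0),(y,b)}) \<or> ({x,y}\<in>E2 \<and> d={(x,b),(y,0)})))"
  proof cases
    case a
    then obtain x y where xy: "x\<in>X" "y\<in>Y" "e = {x,y}" using bp unfolding bipartite_with_def by blast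
    have "e \<in> E1 \<or> e \<in> E2" using a dec unfolding edge_decomposition_def by blast
    then have "(e \<in> E1 \<and> d = {(x,0),(y,0)}) \<or> (e \<in> E2 \<and> d = {(x,0),(y,0)})" using a xy by auto
    then show ?thesis using xy by auto
  next
    case b
    then show ?thesis by auto
  next
    case c
    then show ?thesis by auto
  qed
next
  assume "\<exists>x y b. x\<in>X \<and> y\<in>Y \<and> b \<le> n \<and>
     ((({x,y}\<in>E1 \<and> d={(x,0),(y,b)}) \<or> ({x,y}\<in>E2 \<and> d={(x,b),(y,0)})))"
  then obtain x y b where h: "x\<in>X" "y\<in>Y" "b \<le> n" 
     "(({x,y}\<in>E1 \<and> d={(x,0),(y,b)}) \<or> ({x,y}\<in>E2 \<and> d={(x,b),(y,0)}))" by blast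
  have E: "{x,y} \<in> E" using h(4) dec unfolding edge_decomposition_def by blast
  show "d \<in> S2n_edges X Y E E1 E2 n"
  proof (cases "b = 0")
    case True
    then have "d = (\<lambda>v. (v, 0)) ` {x,y}" using h by auto
    then show ?thesis using E unfolding S2n_edges_def by blast
  next
    case False
    then show ?thesis using h unfolding S2n_edges_def by auto
  qed
qed


definition gS :: "('a + 'a set \<Rightarrow> nat) \<Rightarrow> nat \<Rightarrow> nat \<Rightarrow> ('a\<times>nat) + ('a\<times>nat) set \<Rightarrow> nat" where
  "gS f n t z = (case z of Inl va \<Rightarrow> (f (Inl (fst va)) - 1)*(n+1) + sw t (snd va) + 1
     | Inr d \<Rightarrow> (f (Inr (fst ` d)) - 1)*(n+1) + (n - sw t (Max (snd ` d))) + 1)"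

lemma divlem:
  fixes a a' r r' n :: nat
  assumes "r \<le> n" "r' \<le> n" "a*(n+1)+r = a'*(n+1)+r'"
  shows "a = a' \<and> r = r'"
proof -
  have "(r + a*(n+1)) div (n+1) = a" "(r + a*(n+1)) mod (n+1) = r" using assms(1)
    using div_mult_self1[of "n+1" r a] mod_mult_self1[of r a "n+1"] by simp_all
  moreover have "(r' + a'*(n+1)) div (n+1) = a'" "(r' + a'*(n+1)) mod (n+1) = r'" using assms(2)
    using div_mult_self1[of "n+1" r' a'] mod_mult_self1[of r' a' "n+1"] by simp_all
  ultimately show ?thesis using assms(3) by (metis add.commute)
qed

lemma fst_img1[simp]: "fst ` {(x,0::nat),(y,b)} = {x,y}" "fst ` {(x,b),(y,0::nat)} = {x,y}" by auto
lemma max_img1[simp]: "Max (snd ` {(x,0::nat),(y,b)}) = b" "Max (snd ` {(x,b),(y,0::nat)}) = b"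
  by (auto simp: image_insert)


lemma arith1:
  fixes p q r s t n \<sigma> :: nat
  assumes "1\<le>p" "1\<le>q" "1\<le>r" "p+q+r = \<sigma>" "s \<le> n"
  shows "((p-1)*(n+1)+t+1) + ((q-1)*(n+1)+(n-s)+1) + ((r-1)*(n+1)+s+1) = (\<sigma>-3)*(n+1)+n+3+t"
proof -
  obtain p' q' r' where "p = p'+1" "q = q'+1" "r = r'+1" using assms
    by (metis add.commute le_Suc_ex Suc_eq_plus1_left)
  then have "\<sigma> - 3 = p'+q'+r'" using assms by simp
  then show ?thesis using \<open>p = p'+1\<close> \<open>q = q'+1\<close> \<open>r = r'+1\<close> assms(5)
    by (simp add: algebra_simps)
qed

lemma pair_eq_XY:
  assumes "x1\<in>X" "y1\<in>Y" "x2\<in>X" "y2\<in>Y" "X \<inter> Y = {}" "{x1,y1} = {x2,y2}"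
  shows "x1 = x2 \<and> y1 = y2"
  using assms by (auto simp: doubleton_eq_iff)

lemma main_lab:
  assumes sg: "simple_graph V E" and bp: "bipartite_with V E X Y"
    and dec: "edge_decomposition E E1 E2"
    and f: "edge_magic_labeling V E f \<sigma>" and tn: "t \<le> n"
  shows "edge_magic_labeling (S2n_vertices V n) (S2n_edges X Y E E1 E2 n) (gS f n t)
           ((\<sigma>-3)*(n+1)+n+3+t)"
proof -
  define SE where "SE = S2n_edges X Y E E1 E2 n"
  define SV where "SV = S2n_vertices V n"
  define N where "N = card V + card E"
  define A where "A = Inl`V \<union> Inr`E"
  have bijf: "bij_betw f A {1..N}" using f unfolding edge_magic_labeling_def A_def N_def by blast
  have fedge: "\<And>x y. {x, y} \<in> E \<Longrightarrow> x \<noteq> y \<Longrightarrow> f (Inl x) + f (Inr {x, y}) + f (Inl y) = \<sigma>"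
    using f unfolding edge_magic_labeling_def by blast
  have finV: "finite V" using sg unfolding simple_graph_def by blast
  have "E \<subseteq> {{x, y} | x y. x \<in> V \<and> y \<in> V \<and> x \<noteq> y}" using sg unfolding simple_graph_def by simp
  moreover have "{{x, y} | x y. x \<in> V \<and> y \<in> V \<and> x \<noteq> y} \<subseteq> Pow V" by auto
  ultimately have "E \<subseteq> Pow V" by (rule order_trans)
  then have finE: "finite E" by (metis finV finite_Pow_iff rev_finite_subset)
  have disjXY: "X \<inter> Y = {}" and XYV: "X \<union> Y = V"
    and Eform: "\<And>e. e \<in> E \<Longrightarrow> \<exists>x\<in>X. \<exists>y\<in>Y. e = {x,y}"
    using bp unfolding bipartite_with_def by simp_all
  have E12: "E1 \<union> E2 = E" "E1 \<inter> E2 = {}" using dec unfolding edge_decomposition_def by simp_all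
  have fr: "\<And>z. z \<in> A \<Longrightarrow> 1 \<le> f z \<and> f z \<le> N" by (metis atLeastAtMost_iff bij_betwE bijf)
  have finj: "inj_on f A" using bij_betw_imp_inj_on[OF bijf] .
  have fsurj: "f ` A = {1..N}" using bij_betw_imp_surj_on[OF bijf] .
  define D where "D = Inl`SV \<union> Inr`SE"
  define \<pi> where "\<pi> w = (case w of Inl va \<Rightarrow> Inl (fst va) | Inr d \<Rightarrow> Inr (fst ` d))" for w :: "('a\<times>nat) + ('a\<times>nat) set"
  define \<rho> where "\<rho> w = (case w of Inl va \<Rightarrow> sw t (snd va) | Inr d \<Rightarrow> n - sw t (Max (snd ` d)))" for w :: "('a\<times>nat) + ('a\<times>nat) set"
  have gform: "gS f n t w = (f (\<pi> w) - 1)*(n+1) + \<rho> w + 1" for w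
    by (cases w) (auto simp: gS_def \<pi>_def \<rho>_def)
  have SEc: "\<And>d. d \<in> SE \<longleftrightarrow> (\<exists>x y b. x\<in>X \<and> y\<in>Y \<and> b \<le> n \<and>
     ((({x,y}\<in>E1 \<and> d={(x,0),(y,b)}) \<or> ({x,y}\<in>E2 \<and> d={(x,b),(y,0)}))))"
    unfolding SE_def using SE_char[OF bp dec] by blast
  have piD: "\<pi> w \<in> A \<and> \<rho> w \<le> n" if "w \<in> D" for w
  proof (cases w)
    case (Inl va)
    then show ?thesis using that tn unfolding D_def SV_def S2n_vertices_def \<pi>_def \<rho>_def A_def
      by (auto intro: sw_le)
  next
    case (Inr d)
    then have "d \<in> SE" using that unfolding D_def by auto
    then obtain x y b where h: "x\<in>X" "y\<in>Y" "b \<le> n"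
      "({x,y}\<in>E1 \<and> d={(x,0),(y,b)}) \<or> ({x,y}\<in>E2 \<and> d={(x,b),(y,0)})" using SEc[of d] \<open>d \<in> SE\<close> by iprover
    have "{x,y} \<in> E" using h(4) E12 by blast
    moreover have "fst ` d = {x,y}" using h(4) by auto
    ultimately show ?thesis using Inr unfolding \<pi>_def \<rho>_def A_def by auto
  qed
  have piinj: "w1 = w2" if ww: "w1 \<in> D" "w2 \<in> D" "\<pi> w1 = \<pi> w2" "\<rho> w1 = \<rho> w2" for w1 w2
  proof (cases w1)
    case (Inl va1)
    then obtain va2 where w2: "w2 = Inl va2" using ww unfolding \<pi>_def by (cases w2) auto
    have "snd va1 = snd va2" using ww Inl w2 unfolding \<rho>_def by (auto intro: sw_inj)
    moreover have "fst va1 = fst va2" using ww Inl w2 unfolding \<pi>_def by auto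
    ultimately show ?thesis using Inl w2 by (simp add: prod_eq_iff)
  next
    case (Inr d1)
    then obtain d2 where w2: "w2 = Inr d2" using ww unfolding \<pi>_def by (cases w2) auto
    have "d1 \<in> SE" "d2 \<in> SE" using ww Inr w2 unfolding D_def by auto
    obtain x1 y1 b1 where h1: "x1\<in>X" "y1\<in>Y" "b1 \<le> n"
      "({x1,y1}\<in>E1 \<and> d1={(x1,0),(y1,b1)}) \<or> ({x1,y1}\<in>E2 \<and> d1={(x1,b1),(y1,0)})"
      using SEc[of d1] \<open>d1 \<in> SE\<close> by iprover
    obtain x2 y2 b2 where h2: "x2\<in>X" "y2\<in>Y" "b2 \<le> n"
      "({x2,y2}\<in>E1 \<and> d2={(x2,0),(y2,b2)}) \<or> ({x2,y2}\<in>E2 \<and> d2={(x2,b2),(y2,0)})"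
      using SEc[of d2] \<open>d2 \<in> SE\<close> by iprover
    have f1: "fst ` d1 = {x1,y1}" "Max (snd ` d1) = b1" using h1(4) by auto
    have f2: "fst ` d2 = {x2,y2}" "Max (snd ` d2) = b2" using h2(4) by auto
    have "{x1,y1} = {x2,y2}" using ww(3) Inr w2 f1 f2 unfolding \<pi>_def by simp
    then have xy: "x1 = x2" "y1 = y2" using pair_eq_XY[OF h1(1,2) h2(1,2) disjXY] by auto
    have "n - sw t b1 = n - sw t b2" using ww(4) Inr w2 f1 f2 unfolding \<rho>_def by simp
    moreover have "sw t b1 \<le> n" "sw t b2 \<le> n" using h1(3) h2(3) tn by (auto intro: sw_le)
    ultimately have "sw t b1 = sw t b2" by linarith
    then have "b1 = b2" by (rule sw_inj)
    then have "d1 = d2" using h1(4) h2(4) xy E12(2) by blast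
    then show ?thesis using Inr w2 by simp
  qed
  have ginj: "inj_on (gS f n t) D"
  proof (rule inj_onI)
    fix w1 w2 assume w: "w1 \<in> D" "w2 \<in> D" "gS f n t w1 = gS f n t w2"
    have "(f (\<pi> w1) - 1)*(n+1) + \<rho> w1 = (f (\<pi> w2) - 1)*(n+1) + \<rho> w2" using w(3) gform by simp
    then have "f (\<pi> w1) - 1 = f (\<pi> w2) - 1" "\<rho> w1 = \<rho> w2"
      using divlem piD[OF w(1)] piD[OF w(2)] by blast+
    moreover have "1 \<le> f (\<pi> w1)" "1 \<le> f (\<pi> w2)" using fr piD w by blast+
    ultimately have "f (\<pi> w1) = f (\<pi> w2)" by linarith
    then have "\<pi> w1 = \<pi> w2" using finj piD w inj_on_def by metis
    then show "w1 = w2" using piinj w \<open>\<rho> w1 = \<rho> w2\<close> by blast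
  qed
  have grange: "gS f n t ` D \<subseteq> {1..N*(n+1)}"
  proof
    fix m assume "m \<in> gS f n t ` D"
    then obtain w where w: "w \<in> D" "m = gS f n t w" by blast
    have "1 \<le> f (\<pi> w)" "f (\<pi> w) \<le> N" "\<rho> w \<le> n" using fr piD w by blast+
    then have "(f (\<pi> w) - 1)*(n+1) \<le> (N-1)*(n+1)" by (intro mult_le_mono1 diff_le_mono)
    moreover have "(N-1)*(n+1) + n + 1 = N*(n+1)" using \<open>1 \<le> f (\<pi> w)\<close> \<open>f (\<pi> w) \<le> N\<close>
      by (cases N) (auto simp: algebra_simps)
    ultimately show "m \<in> {1..N*(n+1)}" using w gform \<open>\<rho> w \<le> n\<close> by auto
  qed
  have gsurj: "{1..N*(n+1)} \<subseteq> gS f n t ` D"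
  proof
    fix m assume m: "m \<in> {1..N*(n+1)}"
    define q where "q = (m-1) div (n+1)"
    define r where "r = (m-1) mod (n+1)"
    have mqr: "m = q*(n+1) + r + 1" using m unfolding q_def r_def
      by (metis add.commute atLeastAtMost_iff le_add_diff_inverse div_mult_mod_eq)
    have rn: "r \<le> n" unfolding r_def by (simp add: less_Suc_eq_le)
    have "q < N"
    proof (rule ccontr)
      assume "\<not> q < N"
      then have "N*(n+1) \<le> q*(n+1)" by (intro mult_le_mono1) simp
      then show False using m mqr by simp
    qed
    then have "q+1 \<in> f ` A" using fsurj by simp
    then obtain z where z: "z \<in> A" "f z = q+1" by (metis imageE)
    show "m \<in> gS f n t ` D"
    proof (cases z)
      case (Inl v)
      have vV: "v \<in> V" using z(1) Inl unfolding A_def by auto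
      define w where "w = (Inl (v, sw t r) :: ('a\<times>nat) + ('a\<times>nat) set)"
      have "w \<in> D" using vV sw_le[OF rn tn] unfolding w_def D_def SV_def S2n_vertices_def by auto
      moreover have "gS f n t w = m" using z Inl mqr unfolding w_def gS_def by simp
      ultimately show ?thesis by force
    next
      case (Inr e)
      have eE: "e \<in> E" using z(1) Inr unfolding A_def by auto
      then obtain x y where xy: "x\<in>X" "y\<in>Y" "e = {x,y}" using Eform by blast
      define b where "b = sw t (n - r)"
      have bn: "b \<le> n" unfolding b_def using tn by (auto intro: sw_le)
      have swb: "n - sw t b = r" unfolding b_def using rn by simp
      have "e \<in> E1 \<or> e \<in> E2" using eE E12 by blast
      then obtain d where d: "d \<in> SE" "fst ` d = e" "Max (snd ` d) = b"
      proof
        assume "e \<in> E1"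
        then show ?thesis using that[of "{(x,0),(y,b)}"] SEc xy bn by auto
      next
        assume "e \<in> E2"
        then show ?thesis using that[of "{(x,b),(y,0)}"] SEc xy bn by auto
      qed
      have "Inr d \<in> D" using d unfolding D_def by auto
      moreover have "gS f n t (Inr d) = m" using z Inr mqr d swb unfolding gS_def by simp
      ultimately show ?thesis by force
    qed
  qed
  have gbij: "bij_betw (gS f n t) D {1..N*(n+1)}"
    unfolding bij_betw_def using ginj grange gsurj by blast
  have finD: "finite D" using bij_betw_finite gbij by blast
  have cardD: "card D = N*(n+1)" using bij_betw_same_card[OF gbij] by simp
  have finSE: "finite SE" using finD unfolding D_def by (simp add: finite_image_iff)
  have finSV: "finite SV" using finD unfolding D_def by (simp add: finite_image_iff)
  have "card D = card SV + card SE" unfolding D_def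
    using finSE finSV by (subst card_Un_disjoint) (auto simp: card_image)
  then have tgt: "{1..card SV + card SE} = {1..N*(n+1)}" using cardD by simp
  have edges: "gS f n t (Inl u) + gS f n t (Inr {u, w}) + gS f n t (Inl w) = (\<sigma>-3)*(n+1)+n+3+t"
    if uw: "{u, w} \<in> SE" "u \<noteq> w" for u w
  proof -
    obtain x y b where h: "x\<in>X" "y\<in>Y" "b \<le> n"
      "({x,y}\<in>E1 \<and> {u,w}={(x,0),(y,b)}) \<or> ({x,y}\<in>E2 \<and> {u,w}={(x,b),(y,0)})"
      using uw(1) SEc[of "{u,w}"] by iprover
    have xyE: "{x,y} \<in> E" using h(4) E12 by blast
    have xny: "x \<noteq> y" using h(1,2) disjXY by blast
    have "Inl x \<in> A" "Inl y \<in> A" "Inr {x,y} \<in> A" using xyE XYV h(1,2) unfolding A_def by auto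
    then have fx: "1 \<le> f (Inl x)" "1 \<le> f (Inl y)" "1 \<le> f (Inr {x,y})" using fr by blast+
    have sum: "f (Inl x) + f (Inr {x,y}) + f (Inl y) = \<sigma>" using fedge xyE xny by blast
    have sb: "sw t b \<le> n" using h(3) tn by (rule sw_le)
    have ar: "((f (Inl x)-1)*(n+1)+t+1) + ((f (Inr {x,y})-1)*(n+1)+(n-sw t b)+1)
       + ((f (Inl y)-1)*(n+1)+sw t b+1) = (\<sigma>-3)*(n+1)+n+3+t"
      by (rule arith1[OF fx(1) fx(3) fx(2) sum sb])
    have ar2: "((f (Inl x)-1)*(n+1)+sw t b+1) + ((f (Inr {x,y})-1)*(n+1)+(n-sw t b)+1)
       + ((f (Inl y)-1)*(n+1)+t+1) = (\<sigma>-3)*(n+1)+n+3+t"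
      using ar by linarith
    from h(4) show ?thesis
    proof
      assume a: "{x,y}\<in>E1 \<and> {u,w}={(x,0),(y,b)}"
      then have "gS f n t (Inr {u, w}) = (f (Inr {x,y})-1)*(n+1)+(n-sw t b)+1"
        unfolding gS_def by simp
      moreover have "(u = (x,0) \<and> w = (y,b)) \<or> (u = (y,b) \<and> w = (x,0))"
        using a uw(2) by (auto simp: doubleton_eq_iff)
      ultimately show ?thesis using ar unfolding gS_def by auto
    next
      assume a: "{x,y}\<in>E2 \<and> {u,w}={(x,b),(y,0)}"
      then have "gS f n t (Inr {u, w}) = (f (Inr {x,y})-1)*(n+1)+(n-sw t b)+1"
        unfolding gS_def by simp
      moreover have "(u = (x,b) \<and> w = (y,0)) \<or> (u = (y,0) \<and> w = (x,b))"
        using a uw(2) by (auto simp: doubleton_eq_iff)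
      ultimately show ?thesis using ar2 unfolding gS_def by auto
    qed
  qed
  have gb: "bij_betw (gS f n t) (Inl ` SV \<union> Inr ` SE) {1 .. card SV + card SE}"
    using gbij unfolding tgt D_def .
  show ?thesis unfolding edge_magic_labeling_def
  proof (intro conjI allI impI)
    show "bij_betw (gS f n t) (Inl ` S2n_vertices V n \<union> Inr ` S2n_edges X Y E E1 E2 n)
      {1..card (S2n_vertices V n) + card (S2n_edges X Y E E1 E2 n)}"
      using gb unfolding SV_def SE_def .
  next
    fix u w assume "{u, w} \<in> S2n_edges X Y E E1 E2 n \<and> u \<noteq> w"
    then show "gS f n t (Inl u) + gS f n t (Inr {u, w}) + gS f n t (Inl w) = (\<sigma>-3)*(n+1)+n+3+t"
      using edges unfolding SE_def by blast
  qed
qed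


theorem mainTheorem13:
  fixes V X Y :: "'a set" and E E1 E2 :: "'a set set"
  assumes "simple_graph V E"
    and "edge_magic V E"
    and "bipartite_with V E X Y"
    and "edge_decomposition E E1 E2"
  shows "\<forall>M::nat. \<forall>\<^sub>F n in sequentially.
           (let T = valences (S2n_vertices V n) (S2n_edges X Y E E1 E2 n)
            in infinite T \<or> M \<le> card T)"
proof
  fix M :: nat
  obtain \<sigma> where "\<sigma> \<in> valences V E" using assms(2) unfolding edge_magic_def by blast
  then obtain f where f: "edge_magic_labeling V E f \<sigma>" unfolding valences_def by blast
  have "infinite T \<or> M \<le> card T" if nM: "n \<ge> M" and T: "T = valences (S2n_vertices V n) (S2n_edges X Y E E1 E2 n)" for n T
  proof (cases "infinite T")
    case True then show ?thesis by simp
  next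
    case False
    then have finT: "finite T" by simp
    define K where "K t = (\<sigma>-3)*(n+1)+n+3+t" for t
    have sub: "K ` {0..n} \<subseteq> T"
    proof
      fix k assume "k \<in> K ` {0..n}"
      then obtain t where t: "t \<le> n" "k = K t" by auto
      have "edge_magic_labeling (S2n_vertices V n) (S2n_edges X Y E E1 E2 n) (gS f n t) k"
        using main_lab[OF assms(1) assms(3) assms(4) f t(1)] t(2) unfolding K_def by simp
      then show "k \<in> T" unfolding T valences_def by blast
    qed
    have "inj_on K {0..n}" unfolding K_def by (rule inj_onI) simp
    then have "card (K ` {0..n}) = n + 1" by (simp add: card_image)
    moreover have "card (K ` {0..n}) \<le> card T" using card_mono[OF finT sub] .
    ultimately show ?thesis using nM by simp
  qed
  then show "\<forall>\<^sub>F n in sequentially.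
           (let T = valences (S2n_vertices V n) (S2n_edges X Y E E1 E2 n)
            in infinite T \<or> M \<le> card T)"
    unfolding Let_def by (intro eventually_sequentiallyI[of M]) simp
qed

end
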